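(* Let $k$ be an algebraically closed field of arbitrary characteristic. Fix integers $d_2\ge d_1>0$, a smooth quadric $Q\subset\mathbb{P}^3$, lines $L\in|\mathcal{O}_Q(1,0)|$ and $L'\in|\mathcal{O}_Q(0,1)|$, and let $\{q\}=L\cap L'$. Fix $o\in L\setminus\{q\}$ and $o'\in L'\setminus\{q\}$. Let $Z\subset L$ be the effective divisor $d_2\cdot o$ of $L$ and $Z'\subset L'$ the effective divisor $d_1\cdot o'$ of $L'$, regarded as zero-dimensional subschemes of $Q$ of degrees $d_2$ and $d_1$ respectively. Then there is a smooth divisor $Y\in|\mathcal{O}_Q(d_1,d_2)|$ such that $Y\cap L=Z$ and $Y\cap L'=Z'$ (in particular, set-theoretically $Y$ meets $L$ only at $o$ and $L'$ only at $o'$).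
   Context: $\mathcal{O}_Q(a,b)$ denotes the line bundle of bidegree $(a,b)$ on $Q\cong\mathbb{P}^1\times\mathbb{P}^1$; a curve in $|\mathcal{O}_Q(d_1,d_2)|$ meets a line of $|\mathcal{O}_Q(1,0)|$ in degree $d_2$ and a line of $|\mathcal{O}_Q(0,1)|$ in degree $d_1$. *)

theory Defs
  imports "HOL-Computational_Algebra.Polynomial"
begin

text \<open>Q = P^1 x P^1 with bihomogeneous coordinates ((x0,x1),(y0,y1)).
A divisor of bidegree (d1,d2) is the zero scheme of a nonzero form
F = sum_{i<=d1, j<=d2} c i j * x0^i x1^(d1-i) y0^j y1^(d2-j).\<close>

definition alg_closed_field :: "'a::field itself \<Rightarrow> bool" where
  "alg_closed_field _ \<longleftrightarrow> (\<forall>p::'a poly. degree p > 0 \<longrightarrow> (\<exists>x. poly p x = 0))"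

definition P1pt :: "'a::field \<times> 'a \<Rightarrow> bool" where
  "P1pt v \<longleftrightarrow> v \<noteq> (0, 0)"

definition P1eq :: "'a::field \<times> 'a \<Rightarrow> 'a \<times> 'a \<Rightarrow> bool" where
  "P1eq u v \<longleftrightarrow> fst u * snd v = snd u * fst v"

definition bihom :: "(nat \<Rightarrow> nat \<Rightarrow> 'a::field) \<Rightarrow> nat \<Rightarrow> nat \<Rightarrow> 'a \<times> 'a \<Rightarrow> 'a \<times> 'a \<Rightarrow> 'a" where
  "bihom c d1 d2 x y = (\<Sum>i\<le>d1. \<Sum>j\<le>d2. c i j * fst x ^ i * snd x ^ (d1 - i)
                                                 * fst y ^ j * snd y ^ (d2 - j))"

definition dx0 :: "(nat \<Rightarrow> nat \<Rightarrow> 'a::field) \<Rightarrow> nat \<Rightarrow> nat \<Rightarrow> 'a \<times> 'a \<Rightarrow> 'a \<times> 'a \<Rightarrow> 'a" where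
  "dx0 c d1 d2 x y = (\<Sum>i\<le>d1. \<Sum>j\<le>d2. c i j * of_nat i * fst x ^ (i - 1) * snd x ^ (d1 - i)
                                                 * fst y ^ j * snd y ^ (d2 - j))"

definition dx1 :: "(nat \<Rightarrow> nat \<Rightarrow> 'a::field) \<Rightarrow> nat \<Rightarrow> nat \<Rightarrow> 'a \<times> 'a \<Rightarrow> 'a \<times> 'a \<Rightarrow> 'a" where
  "dx1 c d1 d2 x y = (\<Sum>i\<le>d1. \<Sum>j\<le>d2. c i j * fst x ^ i * of_nat (d1 - i) * snd x ^ (d1 - i - 1)
                                                 * fst y ^ j * snd y ^ (d2 - j))"

definition dy0 :: "(nat \<Rightarrow> nat \<Rightarrow> 'a::field) \<Rightarrow> nat \<Rightarrow> nat \<Rightarrow> 'a \<times> 'a \<Rightarrow> 'a \<times> 'a \<Rightarrow> 'a" where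
  "dy0 c d1 d2 x y = (\<Sum>i\<le>d1. \<Sum>j\<le>d2. c i j * fst x ^ i * snd x ^ (d1 - i)
                                                 * of_nat j * fst y ^ (j - 1) * snd y ^ (d2 - j))"

definition dy1 :: "(nat \<Rightarrow> nat \<Rightarrow> 'a::field) \<Rightarrow> nat \<Rightarrow> nat \<Rightarrow> 'a \<times> 'a \<Rightarrow> 'a \<times> 'a \<Rightarrow> 'a" where
  "dy1 c d1 d2 x y = (\<Sum>i\<le>d1. \<Sum>j\<le>d2. c i j * fst x ^ i * snd x ^ (d1 - i)
                                                 * fst y ^ j * of_nat (d2 - j) * snd y ^ (d2 - j - 1))"

text \<open>The form is nonzero and its zero scheme is smooth (Jacobian criterion:
no point of P^1 x P^1 where F and all four partials vanish).\<close>
definition smooth_bidivisor :: "(nat \<Rightarrow> nat \<Rightarrow> 'a::field) \<Rightarrow> nat \<Rightarrow> nat \<Rightarrow> bool" where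
  "smooth_bidivisor c d1 d2 \<longleftrightarrow>
     (\<exists>i\<le>d1. \<exists>j\<le>d2. c i j \<noteq> 0) \<and>
     (\<forall>x y. P1pt x \<longrightarrow> P1pt y \<longrightarrow>
        \<not> (bihom c d1 d2 x y = 0 \<and> dx0 c d1 d2 x y = 0 \<and> dx1 c d1 d2 x y = 0
             \<and> dy0 c d1 d2 x y = 0 \<and> dy1 c d1 d2 x y = 0))"

definition lin_at :: "'a::field \<times> 'a \<Rightarrow> 'a \<times> 'a \<Rightarrow> 'a" where
  "lin_at s y = snd s * fst y - fst s * snd y"

end

theory Submission
  imports Defs
begin


lemma alg_closed_infinite:
  assumes "alg_closed_field TYPE('a::field)"
  shows "infinite (UNIV::'a set)"
proof
  assume fin: "finite (UNIV::'a set)"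
  define P :: "'a poly" where "P = (\<Prod>a\<in>UNIV. [:-a, 1:])"
  have P0: "P \<noteq> 0" unfolding P_def using fin by (simp add: prod_zero_iff)
  have ev: "poly P x = 0" for x
    unfolding P_def poly_prod using fin by (simp add: prod_zero_iff)
  have "degree (pCons 1 P) > 0" using P0 by simp
  then obtain x where "poly (pCons 1 P) x = 0"
    using assms unfolding alg_closed_field_def by blast
  then show False using ev by simp
qed

lemma poly_unique:
  fixes P Q :: "'a::field poly"
  assumes "infinite (UNIV::'a set)" and "\<And>z. poly P z = poly Q z"
  shows "P = Q"
proof (rule ccontr)
  assume "P \<noteq> Q"
  then have "P - Q \<noteq> 0" by simp
  then have "finite {z. poly (P - Q) z = 0}" by (rule poly_roots_finite)
  moreover have "{z. poly (P - Q) z = 0} = UNIV" using assms(2) by auto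
  ultimately show False using assms(1) by simp
qed

lemma coeff1_mult: "coeff (p * q) 1 = coeff p 0 * coeff q 1 + coeff p 1 * coeff q 0"
  by (simp add: coeff_mult)

lemma coeff1_power: "coeff ([:a, b:] ^ n) 1 = of_nat n * a ^ (n - 1) * b"
proof (induction n)
  case 0 then show ?case by simp
next
  case (Suc n)
  have "coeff ([:a, b:] ^ Suc n) 1 = a * coeff ([:a, b:] ^ n) 1 + b * a ^ n"
    by (simp add: coeff1_mult coeff_0_power)
  also have "\<dots> = of_nat (Suc n) * a ^ n * b"
    using Suc by (cases n) (simp_all add: algebra_simps)
  finally show ?case by simp
qed

lemma coeff1_pcompose: "coeff (pcompose p [:a, b:]) 1 = b * poly (pderiv p) a"
proof (induction p)
  case 0 then show ?case by simp
next
  case (pCons c p)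
  have c0: "coeff (pcompose p [:a, b:]) 0 = poly p a"
    by (simp add: poly_0_coeff_0[symmetric] poly_pcompose)
  have e1: "coeff (pcompose (pCons c p) [:a, b:]) 1 = coeff ([:c:] + [:a, b:] * pcompose p [:a, b:]) 1"
    by (simp only: pcompose_pCons)
  also have "\<dots> = a * coeff (pcompose p [:a, b:]) 1 + b * coeff (pcompose p [:a, b:]) 0"
    by (simp only: coeff_add coeff1_mult) simp
  finally show ?case
    using pCons.IH c0 by (simp add: pderiv_pCons algebra_simps)
qed

lemma term_coeff1: "coeff ([:x0, w0:] ^ i * [:x1, w1:] ^ m) 1 =
   x0 ^ i * (of_nat m * x1 ^ (m - 1) * w1) + (of_nat i * x0 ^ (i - 1) * w0) * x1 ^ m"
  by (simp only: coeff1_mult coeff1_power coeff_0_power) simp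

definition PX :: "(nat \<Rightarrow> nat \<Rightarrow> 'a::field) \<Rightarrow> nat \<Rightarrow> nat \<Rightarrow> 'a \<times> 'a \<Rightarrow> 'a \<times> 'a \<Rightarrow> 'a \<times> 'a \<Rightarrow> 'a poly" where
  "PX c d1 d2 x w y = (\<Sum>i\<le>d1. \<Sum>j\<le>d2. smult (c i j * fst y ^ j * snd y ^ (d2 - j))
       ([:fst x, fst w:] ^ i * [:snd x, snd w:] ^ (d1 - i)))"

lemma PX_poly: "poly (PX c d1 d2 x w y) z = bihom c d1 d2 (fst x + z * fst w, snd x + z * snd w) y"
  unfolding PX_def bihom_def
  by (simp add: poly_sum algebra_simps)

lemma PX_coeff1: "coeff (PX c d1 d2 x w y) 1 = fst w * dx0 c d1 d2 x y + snd w * dx1 c d1 d2 x y"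
proof -
  have "coeff (PX c d1 d2 x w y) 1 = (\<Sum>i\<le>d1. \<Sum>j\<le>d2.
      fst w * (c i j * of_nat i * fst x ^ (i - 1) * snd x ^ (d1 - i) * fst y ^ j * snd y ^ (d2 - j))
    + snd w * (c i j * fst x ^ i * of_nat (d1 - i) * snd x ^ (d1 - i - 1) * fst y ^ j * snd y ^ (d2 - j)))"
    unfolding PX_def coeff_sum coeff_smult
    by (intro sum.cong refl) (simp only: coeff_smult term_coeff1, simp add: algebra_simps)
  also have "\<dots> = fst w * dx0 c d1 d2 x y + snd w * dx1 c d1 d2 x y"
    unfolding dx0_def dx1_def by (simp add: sum.distrib sum_distrib_left)
  finally show ?thesis .
qed

lemma swap_bihom: "bihom c d1 d2 x y = bihom (\<lambda>j i. c i j) d2 d1 y x"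
  unfolding bihom_def by (subst sum.swap) (simp add: mult_ac)
lemma swap_dy0: "dy0 c d1 d2 x y = dx0 (\<lambda>j i. c i j) d2 d1 y x"
  unfolding dy0_def dx0_def by (subst sum.swap) (simp add: mult_ac)
lemma swap_dy1: "dy1 c d1 d2 x y = dx1 (\<lambda>j i. c i j) d2 d1 y x"
  unfolding dy1_def dx1_def by (subst sum.swap) (simp add: mult_ac)




definition hom :: "nat \<Rightarrow> 'a::field poly \<Rightarrow> 'a \<times> 'a \<Rightarrow> 'a" where
  "hom d h x = (\<Sum>i\<le>d. coeff h i * fst x ^ i * snd x ^ (d - i))"

lemma poly_bound: "degree (h::'a::field poly) \<le> d \<Longrightarrow> poly h z = (\<Sum>i\<le>d. coeff h i * z ^ i)"
proof -
  assume a: "degree h \<le> d"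
  have "poly h z = (\<Sum>i\<le>degree h. coeff h i * z ^ i)" by (simp only: poly_altdef)
  also have "\<dots> = (\<Sum>i\<le>d. coeff h i * z ^ i)"
    by (rule sum.mono_neutral_left) (use a in \<open>auto simp: coeff_eq_0\<close>)
  finally show ?thesis .
qed

lemma hom_L1:
  assumes "degree h \<le> d" "snd x \<noteq> 0"
  shows "hom d h x = snd x ^ d * poly h (fst x / snd x)"
proof -
  have "snd x ^ d * poly h (fst x / snd x) = (\<Sum>i\<le>d. snd x ^ d * (coeff h i * (fst x / snd x) ^ i))"
    using assms(1) by (simp add: poly_bound sum_distrib_left)
  also have "\<dots> = (\<Sum>i\<le>d. coeff h i * fst x ^ i * snd x ^ (d - i))"
  proof (intro sum.cong refl)
    fix i assume "i \<in> {..d}"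
    then have "snd x ^ d = snd x ^ i * snd x ^ (d - i)" by (simp add: power_add[symmetric])
    then show "snd x ^ d * (coeff h i * (fst x / snd x) ^ i) = coeff h i * fst x ^ i * snd x ^ (d - i)"
      using assms(2) by (simp add: power_divide field_simps)
  qed
  finally show ?thesis unfolding hom_def by simp
qed

lemma hom_L2: "hom d h (x0, 0) = coeff h d * x0 ^ d"
proof -
  have "hom d h (x0, 0) = (\<Sum>i\<le>d. coeff h i * x0 ^ i * 0 ^ (d - i))"
    by (simp add: hom_def)
  also have "\<dots> = (\<Sum>i\<in>{d}. coeff h i * x0 ^ i * 0 ^ (d - i))"
    by (rule sum.mono_neutral_right) auto
  finally have "hom d h (x0, 0) = (\<Sum>i\<in>{d}. coeff h i * x0 ^ i * 0 ^ (d - i))" .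
  then show ?thesis by simp
qed

lemma coeff_top:
  assumes "degree h \<le> d" "degree g \<le> e"
  shows "coeff (h * g) (d + e) = coeff h d * coeff g e"
proof (cases "degree h = d \<and> degree g = e")
  case True then show ?thesis using coeff_mult_degree_sum[of h g] by simp
next
  case False
  then have "degree h < d \<or> degree g < e" using assms by auto
  moreover have "degree (h * g) \<le> degree h + degree g" by (rule degree_mult_le)
  ultimately have "degree (h * g) < d + e" "coeff h d * coeff g e = 0"
    using assms by (auto simp: coeff_eq_0)
  then have "coeff (h * g) (d + e) = 0" "coeff h d * coeff g e = 0" by (auto simp: coeff_eq_0)
  then show ?thesis by simp
qed

lemma hom_mult:
  assumes "degree h \<le> d" "degree g \<le> e"
  shows "hom (d + e) (h * g) x = hom d h x * hom e g x"
proof (cases "snd x = 0")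
  case True
  then obtain x0 where x: "x = (x0, 0)" by (cases x) auto
  show ?thesis unfolding x hom_L2 coeff_top[OF assms] by (simp add: power_add)
next
  case False
  have "degree (h * g) \<le> d + e" using degree_mult_le[of h g] assms by simp
  then show ?thesis using False assms by (simp add: hom_L1 power_add)
qed

definition linp :: "'a::field \<times> 'a \<Rightarrow> 'a poly" where
  "linp r = [:- fst r, snd r:]"

lemma lin_hom: "lin_at r x = hom 1 (linp r) x"
  unfolding lin_at_def hom_def linp_def by (simp add: algebra_simps)

lemma prodlin_hom:
  "prod_list (map (\<lambda>r. lin_at r x) rs) = hom (length rs) (prod_list (map linp rs)) x
   \<and> degree (prod_list (map linp rs)) \<le> length rs"
proof (induction rs)
  case Nil then show ?case by (simp add: hom_def)
next
  case (Cons r rs)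
  have dl: "degree (linp r) \<le> 1" unfolding linp_def by simp
  have "hom (1 + length rs) (linp r * prod_list (map linp rs)) x
        = hom 1 (linp r) x * hom (length rs) (prod_list (map linp rs)) x"
    using hom_mult[OF dl] Cons.IH by blast
  moreover have "degree (linp r * prod_list (map linp rs)) \<le> 1 + length rs"
    using degree_mult_le[of "linp r" "prod_list (map linp rs)"] dl Cons.IH by simp
  ultimately show ?case using Cons.IH by (simp add: lin_hom)
qed

lemma bihom_sum2:
  "bihom (\<lambda>i j. coeff h1 i * coeff g1 j + e * (coeff h2 i * coeff g2 j)) d1 d2 x y
   = hom d1 h1 x * hom d2 g1 y + e * (hom d1 h2 x * hom d2 g2 y)"
  unfolding bihom_def hom_def
  by (simp add: sum_distrib_left sum_distrib_right sum.distrib algebra_simps)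

definition lp :: "'a::field list \<Rightarrow> 'a poly" where
  "lp rs = prod_list (map (\<lambda>r. [:- r, 1:]) rs)"

lemma lp_poly: "poly (lp rs) z = prod_list (map (\<lambda>r. z - r) rs)"
  unfolding lp_def by (induction rs) (auto simp: algebra_simps)

lemma lp_root: "poly (lp rs) z = 0 \<longleftrightarrow> z \<in> set rs"
  unfolding lp_poly by (induction rs) auto

lemma lp_double: "poly (lp rs) z = 0 \<Longrightarrow> poly (pderiv (lp rs)) z = 0 \<Longrightarrow> \<not> distinct rs"
proof (induction rs)
  case Nil then show ?case by (simp add: lp_def)
next
  case (Cons r rs)
  have e: "lp (r # rs) = [:- r, 1:] * lp rs" by (simp add: lp_def)
  have d: "poly (pderiv (lp (r # rs))) z = poly (lp rs) z + (z - r) * poly (pderiv (lp rs)) z"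
    unfolding e pderiv_mult by (simp add: pderiv_pCons algebra_simps)
  show ?case
  proof (cases "z = r")
    case True
    then have "poly (lp rs) z = 0" using Cons.prems(2) d by simp
    then show ?thesis using True lp_root by auto
  next
    case False
    then have "poly (lp rs) z = 0" using Cons.prems(1) e by simp
    moreover then have "poly (pderiv (lp rs)) z = 0" using Cons.prems(2) d False by simp
    ultimately show ?thesis using Cons.IH by simp
  qed
qed

lemma lp_scale:
  fixes u :: "'a::field"
  assumes "u \<noteq> 0"
  shows "lp (map (\<lambda>r. r * u) rs) = smult (u ^ length rs) (pcompose (lp rs) [:0, inverse u:])"
proof (induction rs)
  case Nil then show ?case by (simp add: lp_def pcompose_1)
next
  case (Cons r rs)
  have "lp (map (\<lambda>r. r * u) (r # rs)) = [:- (r * u), 1:] * lp (map (\<lambda>r. r * u) rs)"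
    by (simp add: lp_def)
  also have "\<dots> = smult u (pcompose [:- r, 1:] [:0, inverse u:]) * smult (u ^ length rs) (pcompose (lp rs) [:0, inverse u:])"
    using Cons.IH assms by (simp add: pcompose_pCons mult.commute)
  also have "\<dots> = smult (u ^ length (r # rs)) (pcompose [:- r, 1:] [:0, inverse u:] * pcompose (lp rs) [:0, inverse u:])"
    by (simp add: mult_ac)
  also have "pcompose [:- r, 1:] [:0, inverse u:] * pcompose (lp rs) [:0, inverse u:] = pcompose (lp (r # rs)) [:0, inverse u:]"
    by (simp only: lp_def list.map prod_list.Cons pcompose_mult)
  finally show ?case .
qed

lemma lp_scale_deriv:
  fixes u :: "'a::field"
  assumes "u \<noteq> 0"
  shows "poly (pderiv (lp (map (\<lambda>r. r * u) rs))) a = 0 \<longleftrightarrow> poly (pderiv (lp rs)) (a / u) = 0"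
  using assms unfolding lp_scale[OF assms]
  by (simp add: pderiv_smult pderiv_pcompose poly_pcompose pderiv_pCons field_simps)

lemma lp_scale_poly:
  fixes u :: "'a::field"
  assumes "u \<noteq> 0"
  shows "poly (lp (map (\<lambda>r. r * u) rs)) a = u ^ length rs * poly (lp rs) (a / u)"
  using assms unfolding lp_scale[OF assms]
  by (simp add: poly_pcompose field_simps)




lemma exists_list:
  assumes "infinite (UNIV::'a::field set)"
  shows "\<exists>xs::'a list. distinct xs \<and> 0 \<notin> set xs \<and> length xs = n"
proof -
  have "infinite (UNIV - {0::'a})" using assms by simp
  then obtain S where S: "finite S" "card S = n" "S \<subseteq> UNIV - {0::'a}"
    using infinite_arbitrarily_large by blast
  then obtain xs where "set xs = S" "distinct xs" using finite_distinct_list by blast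
  then show ?thesis using S by (auto simp: distinct_card)
qed

lemma lin_self: "lin_at r r = 0"
  unfolding lin_at_def by (simp add: mult.commute)

lemma lin_ne: "\<not> P1eq t p \<Longrightarrow> lin_at t p \<noteq> 0"
  unfolding lin_at_def P1eq_def by (simp add: mult.commute)

lemma lin_ne': "\<not> P1eq t p \<Longrightarrow> lin_at p t \<noteq> 0"
  unfolding lin_at_def P1eq_def by (simp add: mult.commute)

lemma lin_indep:
  assumes "\<not> P1eq t p" "lin_at t x = 0" "lin_at p x = 0"
  shows "\<not> P1pt x"
proof -
  have "fst x * (fst p * snd t - fst t * snd p) = fst p * lin_at t x - fst t * lin_at p x"
    by (simp add: lin_at_def algebra_simps)
  moreover have "snd x * (fst p * snd t - fst t * snd p) = snd p * lin_at t x - snd t * lin_at p x"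
    by (simp add: lin_at_def algebra_simps)
  moreover have "fst p * snd t - fst t * snd p \<noteq> 0" using assms(1) unfolding P1eq_def
    by (simp add: mult.commute)
  ultimately have "fst x = 0" "snd x = 0" using assms(2,3) by auto
  then show ?thesis unfolding P1pt_def by (cases x) auto
qed

lemma lin_shift: "lin_at r (fst x + z * fst w, snd x + z * snd w) = lin_at r x + z * lin_at r w"
  unfolding lin_at_def by (simp add: algebra_simps)

lemma lin_comb: "lin_at (fst p - al * fst t, snd p - al * snd t) x = lin_at p x - al * lin_at t x"
  unfolding lin_at_def by (simp add: algebra_simps)

lemma prod_const: "prod_list (map (\<lambda>_. a) xs) = a ^ length xs"
  by (induction xs) auto

lemma rep_lp:
  assumes "length xs = d"
  shows "poly (lp (map (\<lambda>r. r * lin_at t x) xs)) (lin_at p x)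
     = hom d (prod_list (map linp (map (\<lambda>al. (fst p - al * fst t, snd p - al * snd t)) xs))) x
   \<and> degree (prod_list (map linp (map (\<lambda>al. (fst p - al * fst t, snd p - al * snd t)) xs))) \<le> d"
proof -
  have "poly (lp (map (\<lambda>r. r * lin_at t x) xs)) (lin_at p x)
      = prod_list (map (\<lambda>r. lin_at r x) (map (\<lambda>al. (fst p - al * fst t, snd p - al * snd t)) xs))"
    unfolding lp_poly by (simp add: lin_comb o_def)
  then show ?thesis using prodlin_hom[of x "map (\<lambda>al. (fst p - al * fst t, snd p - al * snd t)) xs"]
    assms by simp
qed

lemma deriv_nonzero:
  assumes "0 \<notin> set xs"
  shows "pderiv (lp (0 # xs)) \<noteq> 0"
proof -
  have "lp (0 # xs) = [:0, 1:] * lp xs" by (simp add: lp_def)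
  then have "poly (pderiv (lp (0 # xs))) 0 = poly (lp xs) 0"
    by (simp add: pderiv_mult pderiv_pCons)
  moreover have "poly (lp xs) 0 \<noteq> 0" using assms lp_root by metis
  ultimately show ?thesis by auto
qed

lemma distinct_scale:
  fixes v :: "'a::field"
  assumes "v \<noteq> 0" "distinct xs" "0 \<notin> set xs"
  shows "distinct (map (\<lambda>r. r * v) (0 # xs))"
  using assms by (auto simp: distinct_map inj_on_def)




theorem theorem4p3:
  fixes p p' s t :: "'a::field \<times> 'a" and d1 d2 :: nat
  assumes "alg_closed_field TYPE('a)"
    and "0 < d1" and "d1 \<le> d2"
    and "P1pt p" and "P1pt p'" and "P1pt s" and "P1pt t"
    and "\<not> P1eq s p'" and "\<not> P1eq t p"
  shows "\<exists>c :: nat \<Rightarrow> nat \<Rightarrow> 'a.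
           smooth_bidivisor c d1 d2
         \<and> (\<exists>lam. lam \<noteq> 0 \<and> (\<forall>y. bihom c d1 d2 p y = lam * lin_at s y ^ d2))
         \<and> (\<exists>mu. mu \<noteq> 0 \<and> (\<forall>x. bihom c d1 d2 x p' = mu * lin_at t x ^ d1))"
proof -
  have inf: "infinite (UNIV::'a set)" using assms(1) by (rule alg_closed_infinite)
  have d2: "0 < d2" using assms(2,3) by simp
  obtain als :: "'a list" where als: "distinct als" "0 \<notin> set als" "length als = d1 - 1"
    using exists_list[OF inf] by blast
  obtain bes :: "'a list" where bes: "distinct bes" "0 \<notin> set bes" "length bes = d2 - 1"
    using exists_list[OF inf] by blast
  have len1: "length (0 # als) = d1" using als assms(2) by simp
  have len2: "length (0 # bes) = d2" using bes d2 by simp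
  define rho where "rho u = lp (map (\<lambda>r. r * u) (0 # als))" for u :: 'a
  define kap where "kap v = lp (map (\<lambda>r. r * v) (0 # bes))" for v :: 'a
  define S1 where "S1 = {z. poly (pderiv (lp (0 # als))) z = 0}"
  define S2 where "S2 = {z. poly (pderiv (lp (0 # bes))) z = 0}"
  have fS1: "finite S1" unfolding S1_def using deriv_nonzero[OF als(2)] by (rule poly_roots_finite)
  have fS2: "finite S2" unfolding S2_def using deriv_nonzero[OF bes(2)] by (rule poly_roots_finite)
  define bad where "bad = (\<lambda>(z1, z2). - 1 / (poly (lp (0 # als)) z1 * poly (lp (0 # bes)) z2)) ` (S1 \<times> S2)"
  have "finite (insert 0 bad)" unfolding bad_def using fS1 fS2 by simp
  then obtain eps :: 'a where eps: "eps \<notin> insert 0 bad"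
    using ex_new_if_finite[OF inf] by blast
  define R where "R x = poly (rho (lin_at t x)) (lin_at p x)" for x
  define Qf where "Qf y = poly (kap (lin_at s y)) (lin_at p' y)" for y
  define hR where "hR = prod_list (map linp (map (\<lambda>al. (fst p - al * fst t, snd p - al * snd t)) (0 # als)))"
  define gQ where "gQ = prod_list (map linp (map (\<lambda>al. (fst p' - al * fst s, snd p' - al * snd s)) (0 # bes)))"
  define h1 where "h1 = prod_list (map linp (replicate d1 t))"
  define g1 where "g1 = prod_list (map linp (replicate d2 s))"
  have Rh: "R x = hom d1 hR x" for x
    using rep_lp[OF len1, of t x p] unfolding R_def rho_def hR_def by simp
  have Qh: "Qf y = hom d2 gQ y" for y
    using rep_lp[OF len2, of s y p'] unfolding Qf_def kap_def gQ_def by simp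
  have h1h: "lin_at t x ^ d1 = hom d1 h1 x" for x
    using prodlin_hom[of x "replicate d1 t"] unfolding h1_def by (simp add: prod_list_replicate)
  have g1h: "lin_at s y ^ d2 = hom d2 g1 y" for y
    using prodlin_hom[of y "replicate d2 s"] unfolding g1_def by (simp add: prod_list_replicate)
  define c where "c i j = coeff h1 i * coeff g1 j + eps * (coeff hR i * coeff gQ j)" for i j
  have bh: "bihom c d1 d2 x y = lin_at t x ^ d1 * lin_at s y ^ d2 + eps * (R x * Qf y)" for x y
    unfolding c_def bihom_sum2 Rh Qh h1h g1h ..
  have Rp: "R p = 0" unfolding R_def rho_def lin_self by (simp add: lp_root)
  have Qp: "Qf p' = 0" unfolding Qf_def kap_def lin_self by (simp add: lp_root)
  have ltp: "lin_at t p \<noteq> 0" using assms(9) by (rule lin_ne)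
  have lsp: "lin_at s p' \<noteq> 0" using assms(8) by (rule lin_ne)
  have lpt: "lin_at p t \<noteq> 0" using assms(9) by (rule lin_ne')
  have lps: "lin_at p' s \<noteq> 0" using assms(8) by (rule lin_ne')
  show ?thesis
  proof (intro exI conjI)
    show "lin_at t p ^ d1 \<noteq> 0" using ltp by simp
    show "\<forall>y. bihom c d1 d2 p y = lin_at t p ^ d1 * lin_at s y ^ d2"
      using bh Rp by simp
    show "lin_at s p' ^ d2 \<noteq> 0" using lsp by simp
    show "\<forall>x. bihom c d1 d2 x p' = lin_at s p' ^ d2 * lin_at t x ^ d1"
      using bh Qp by (simp add: mult.commute)
    show "smooth_bidivisor c d1 d2"
      unfolding smooth_bidivisor_def
    proof (intro conjI allI impI notI)
      show "\<exists>i\<le>d1. \<exists>j\<le>d2. c i j \<noteq> 0"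
      proof (rule ccontr)
        assume "\<not> ?thesis"
        then have "bihom c d1 d2 p p' = 0" unfolding bihom_def by simp
        then show False using bh[of p p'] Rp ltp lsp by simp
      qed
    next
      fix x y :: "'a \<times> 'a"
      assume px: "P1pt x" and py: "P1pt y"
      assume H: "bihom c d1 d2 x y = 0 \<and> dx0 c d1 d2 x y = 0 \<and> dx1 c d1 d2 x y = 0
             \<and> dy0 c d1 d2 x y = 0 \<and> dy1 c d1 d2 x y = 0"
      define u where "u = lin_at t x"
      define a where "a = lin_at p x"
      define v where "v = lin_at s y"
      define b where "b = lin_at p' y"
      have F: "u ^ d1 * v ^ d2 + eps * (R x * Qf y) = 0" using H bh unfolding u_def v_def by simp
      have Dx: "Qf y = 0 \<or> poly (pderiv (rho u)) a = 0"
      proof -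
        define Pour where "Pour = [:u ^ d1 * v ^ d2:] + smult (eps * Qf y) (pcompose (rho u) [:a, lin_at p t:])"
        have "PX c d1 d2 x t y = Pour"
        proof (rule poly_unique[OF inf])
          fix z
          show "poly (PX c d1 d2 x t y) z = poly Pour z"
            unfolding PX_poly bh Pour_def R_def
            by (simp add: lin_shift lin_self poly_pcompose u_def a_def v_def algebra_simps)
        qed
        then have "coeff Pour 1 = 0" using PX_coeff1[of c d1 d2 x t y] H by simp
        moreover have "coeff Pour 1 = eps * Qf y * (lin_at p t * poly (pderiv (rho u)) a)"
          unfolding Pour_def coeff_add coeff_smult coeff1_pcompose by simp
        ultimately have "eps * Qf y * (lin_at p t * poly (pderiv (rho u)) a) = 0" by simp
        then show ?thesis using eps lpt by simp
      qed
      have Dy: "R x = 0 \<or> poly (pderiv (kap v)) b = 0"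
      proof -
        define Pour where "Pour = [:u ^ d1 * v ^ d2:] + smult (eps * R x) (pcompose (kap v) [:b, lin_at p' s:])"
        have "PX (\<lambda>j i. c i j) d2 d1 y s x = Pour"
        proof (rule poly_unique[OF inf])
          fix z
          show "poly (PX (\<lambda>j i. c i j) d2 d1 y s x) z = poly Pour z"
            unfolding PX_poly swap_bihom[of c d1 d2 x, symmetric] bh Pour_def Qf_def
            by (simp add: lin_shift lin_self poly_pcompose u_def b_def v_def algebra_simps)
        qed
        then have "coeff Pour 1 = 0" using PX_coeff1[of "\<lambda>j i. c i j" d2 d1 y s x] H
          by (simp add: swap_dy0[symmetric] swap_dy1[symmetric])
        moreover have "coeff Pour 1 = eps * R x * (lin_at p' s * poly (pderiv (kap v)) b)"
          unfolding Pour_def coeff_add coeff_smult coeff1_pcompose by simp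
        ultimately have "eps * R x * (lin_at p' s * poly (pderiv (kap v)) b) = 0" by simp
        then show ?thesis using eps lps by simp
      qed
      have R0: "u = 0 \<Longrightarrow> R x = a ^ d1"
        unfolding R_def rho_def lp_poly u_def a_def using len1[symmetric] by (simp add: o_def prod_const)
      have Q0: "v = 0 \<Longrightarrow> Qf y = b ^ d2"
        unfolding Qf_def kap_def lp_poly v_def b_def using len2[symmetric] by (simp add: o_def prod_const)
      have Ru: "u \<noteq> 0 \<Longrightarrow> R x = u ^ d1 * poly (lp (0 # als)) (a / u)"
        unfolding R_def rho_def u_def a_def using lp_scale_poly len1 by metis
      have Qv: "v \<noteq> 0 \<Longrightarrow> Qf y = v ^ d2 * poly (lp (0 # bes)) (b / v)"
        unfolding Qf_def kap_def v_def b_def using lp_scale_poly len2 by metis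
      show False
      proof (cases "u = 0")
        case True
        then have "a \<noteq> 0" using lin_indep[OF assms(9)] px unfolding u_def a_def by blast
        then have "R x \<noteq> 0" using R0 True by simp
        moreover have "eps \<noteq> 0" using eps by simp
        ultimately have Q: "Qf y = 0" using F True assms(2) by (simp add: zero_power)
        then have dk: "poly (pderiv (kap v)) b = 0" using Dy \<open>R x \<noteq> 0\<close> by simp
        show False
        proof (cases "v = 0")
          case True
          then have "b \<noteq> 0" using lin_indep[OF assms(8)] py unfolding v_def b_def by blast
          then show False using Q Q0 True by simp
        next
          case False
          have "distinct (map (\<lambda>r. r * v) (0 # bes))" using distinct_scale[OF False bes(1,2)] .
          moreover have "poly (kap v) b = 0" using Q unfolding Qf_def v_def b_def .
          ultimately show False using lp_double dk unfolding kap_def by blast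
        qed
      next
        case uF: False
        show False
        proof (cases "v = 0")
          case True
          then have "b \<noteq> 0" using lin_indep[OF assms(8)] py unfolding v_def b_def by blast
          then have "Qf y \<noteq> 0" using Q0 True by simp
          moreover have "eps \<noteq> 0" using eps by simp
          ultimately have Rz: "R x = 0" using F True d2 by (simp add: zero_power)
          then have dr: "poly (pderiv (rho u)) a = 0" using Dx \<open>Qf y \<noteq> 0\<close> by simp
          have "distinct (map (\<lambda>r. r * u) (0 # als))" using distinct_scale[OF uF als(1,2)] .
          moreover have "poly (rho u) a = 0" using Rz unfolding R_def u_def a_def .
          ultimately show False using lp_double dr unfolding rho_def by blast
        next
          case vF: False
          have Qn: "Qf y \<noteq> 0"
          proof
            assume "Qf y = 0" then show False using F uF vF by simp
          qed
          have Rn: "R x \<noteq> 0"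
          proof
            assume "R x = 0" then show False using F uF vF by simp
          qed
          have z1: "a / u \<in> S1" using Dx Qn lp_scale_deriv[OF uF, of "0 # als" a] unfolding S1_def rho_def by simp
          have z2: "b / v \<in> S2" using Dy Rn lp_scale_deriv[OF vF, of "0 # bes" b] unfolding S2_def kap_def by simp
          define r1 where "r1 = poly (lp (0 # als)) (a / u)"
          define k1 where "k1 = poly (lp (0 # bes)) (b / v)"
          have "u ^ d1 * v ^ d2 * (1 + eps * (r1 * k1)) = 0"
            using F Ru[OF uF] Qv[OF vF] unfolding r1_def k1_def by (simp add: algebra_simps)
          then have e: "1 + eps * (r1 * k1) = 0" using uF vF by simp
          then have "r1 * k1 \<noteq> 0" by auto
          then have "eps = - 1 / (r1 * k1)" using e by (simp add: field_simps eq_neg_iff_add_eq_0)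
          then have "eps \<in> bad" unfolding bad_def r1_def k1_def using z1 z2 by force
          then show False using eps by simp
        qed
      qed
    qed
  qed
qed


end
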